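(* Let $K$ be a finite field of characteristic $p$ and order $q$, and let $s$ be a positive integer with $\gcd(s,q-1)=1$. For any $u\in K$ there exist unique nonnegative integers $w_0,\dots,w_{p-1}$ with $w_0>0$, $\sum_{i=0}^{p-1}w_i=q$ and $W_u=\sum_{i=0}^{p-1}w_i\zeta^i$. If $s$ is nondegenerate over $K$, then $w_i<q$ for every $i\in\{0,\dots,p-1\}$ and $|W_u|<q$.
   Context: $\zeta=\exp(2\pi i/p)$, $\psi(x)=\zeta^{\mathrm{Tr}(x)}$ with $\mathrm{Tr}$ the absolute trace of $K$ to $\mathbb{F}_p$; $W_u=\sum_{x\in K}\psi(x^s-ux)$. The exponent $s$ is degenerate over $K$ if $s\equiv p^k\pmod{q-1}$ for some integer $k$, and nondegenerate otherwise. *)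

theory Defs
  imports "HOL-Analysis.Analysis" "HOL-Computational_Algebra.Primes" "HOL-Number_Theory.Cong"
begin

definition abs_trace :: "'a::{field,finite} \<Rightarrow> 'a" where
  "abs_trace x = (\<Sum>i < multiplicity CHAR('a) CARD('a). x ^ (CHAR('a) ^ i))"

text \<open>The trace lies in the prime field F_p = {of_nat k | k < p}; tr_nat x is the
  representative k in {0..p-1}.\<close>
definition tr_nat :: "'a::{field,finite} \<Rightarrow> nat" where
  "tr_nat x = (THE k. k < CHAR('a) \<and> of_nat k = abs_trace x)"

definition zeta :: "nat \<Rightarrow> complex" where
  "zeta p = exp (2 * pi * \<i> / of_nat p)"

definition psi :: "'a::{field,finite} \<Rightarrow> complex" where
  "psi x = zeta CHAR('a) ^ tr_nat x"

definition Wsum :: "nat \<Rightarrow> 'a::{field,finite} \<Rightarrow> complex" where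
  "Wsum s u = (\<Sum>x\<in>(UNIV::'a set). psi (x ^ s - u * x))"

definition degenerate :: "'a::{field,finite} itself \<Rightarrow> nat \<Rightarrow> bool" where
  "degenerate T s \<longleftrightarrow> (\<exists>k. [s = CHAR('a) ^ k] (mod (CARD('a) - 1)))"

end

theory Submission
  imports Defs "HOL-Computational_Algebra.Polynomial_Factorial"
begin


lemma char_prime: "prime CHAR('a::{field,finite})"
  by (rule prime_CHAR_semidom) (rule finite_imp_CHAR_pos, simp)

lemma char_ge2: "CHAR('a::{field,finite}) \<ge> 2"
  using char_prime[where 'a='a] prime_ge_2_nat by blast

lemma pow_card_same:
  fixes x :: "'a :: {field,finite}"
  shows "x ^ CARD('a) = x"
proof (cases "x = 0")
  case False
  have "x * (\<Prod>y\<in>UNIV-{0}. x * y) = x * x ^ (card (UNIV :: 'a set) - 1) * \<Prod>(UNIV-{0})"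
    by (simp add: prod.distrib mult_ac)
  also have "x * x ^ (card (UNIV :: 'a set) - 1) = x ^ Suc (card (UNIV :: 'a set) - 1)"
    by (subst power_Suc) auto
  also have "Suc (card (UNIV :: 'a set) - 1) = card (UNIV :: 'a set)"
    using finite_UNIV_card_ge_0[where ?'a = 'a] by simp
  also have "(\<Prod>y\<in>UNIV-{0}. x * y) = (\<Prod>y\<in>UNIV-{0}. y)"
    by (rule prod.reindex_bij_witness[of _ "\<lambda>y. y / x" "\<lambda>y. x * y"]) (use False in auto)
  finally show ?thesis
    by simp
qed (use finite_UNIV_card_ge_0[where ?'a = 'a] in auto)

lemma of_nat_mod_char: "(of_nat (n mod CHAR('a)) :: 'a::{field,finite}) = of_nat n"
  by (simp add: of_nat_eq_iff_cong_CHAR)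

lemma of_nat_inverse_char:
  assumes "0 < d" "d < CHAR('a::{field,finite})"
  shows "\<exists>e. (of_nat d :: 'a) * of_nat e = 1"
proof -
  have "coprime d CHAR('a)"
    using assms char_prime[where 'a='a]
    by (metis coprime_commute nat_dvd_not_less prime_imp_coprime)
  then obtain e where "[d * e = Suc 0] (mod CHAR('a))" using cong_solve_coprime_nat by blast
  hence "(of_nat (d * e) :: 'a) = of_nat (Suc 0)" by (simp only: of_nat_eq_iff_cong_CHAR)
  thus ?thesis by auto
qed

definition addsub :: "'a::field set \<Rightarrow> bool" where
  "addsub S \<longleftrightarrow> 0 \<in> S \<and> (\<forall>x\<in>S. \<forall>y\<in>S. x + y \<in> S)"

lemma addsub_nat_mult: "addsub S \<Longrightarrow> x \<in> S \<Longrightarrow> of_nat k * x \<in> S"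
  by (induction k) (auto simp: addsub_def distrib_right)

lemma addsub_neg:
  fixes S :: "'a::{field,finite} set"
  assumes "addsub S" "x \<in> S" shows "-x \<in> S"
proof -
  have "of_nat (CHAR('a) - 1) * x + x = of_nat CHAR('a) * x"
    using char_ge2[where 'a='a] by (simp add: distrib_right of_nat_diff)
  hence "of_nat (CHAR('a) - 1) * x = -x" by (simp add: eq_neg_iff_add_eq_0)
  hence "-x = of_nat (CHAR('a) - 1) * x" by simp
  thus ?thesis using addsub_nat_mult[OF assms] by simp
qed

lemma addsub_diff:
  fixes S :: "'a::{field,finite} set"
  assumes "addsub S" "x \<in> S" "y \<in> S" shows "x - y \<in> S"
  using addsub_neg[OF assms(1,3)] assms unfolding addsub_def by (metis diff_conv_add_uminus)

lemma addsub_extend: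
  fixes S :: "'a::{field,finite} set"
  assumes S: "addsub S" and x: "x \<notin> S"
  defines "S' \<equiv> (\<lambda>(s,j). s + of_nat j * x) ` (S \<times> {..<CHAR('a)})"
  shows "addsub S'" "card S' = CHAR('a) * card S"
proof -
  let ?p = "CHAR('a)"
  have p2: "?p \<ge> 2" by (rule char_ge2)
  show "addsub S'"
    unfolding addsub_def
  proof safe
    show "0 \<in> S'" unfolding S'_def
      by (rule image_eqI[of _ _ "(0,0)"]) (use S p2 in \<open>auto simp: addsub_def\<close>)
  next
    fix a b assume "a \<in> S'" "b \<in> S'"
    then obtain s j s' j' where a: "a = s + of_nat j * x" "s \<in> S"
      and b: "b = s' + of_nat j' * x" "s' \<in> S"
      unfolding S'_def by auto
    have "a + b = (s + s') + of_nat ((j + j') mod ?p) * x"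
      unfolding a b of_nat_mod_char by (simp add: algebra_simps)
    moreover have "s + s' \<in> S" using S a b by (auto simp: addsub_def)
    moreover have "(j + j') mod ?p < ?p" using p2 by simp
    ultimately show "a + b \<in> S'" unfolding S'_def by force
  qed
  have inj: "inj_on (\<lambda>(s,j). s + of_nat j * x) (S \<times> {..<?p})"
  proof -
    have key: "False" if "s \<in> S" "s' \<in> S" "j < j'" "j' < ?p"
      "s + of_nat j * x = s' + of_nat j' * x" for s s' j j'
    proof -
      have "of_nat (j' - j) * x = s - s'"
        using that by (simp add: of_nat_diff algebra_simps)
      hence in1: "of_nat (j' - j) * x \<in> S" using addsub_diff[OF S that(1,2)] by simp
      have "0 < j' - j" "j' - j < CHAR('a)" using that by auto
      from of_nat_inverse_char[OF this] obtain e where e: "(of_nat (j' - j) :: 'a) * of_nat e = 1"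
        by blast
      have "x = of_nat e * (of_nat (j' - j) * x)"
        by (metis e mult.assoc mult.commute mult_1)
      thus False using addsub_nat_mult[OF S in1, of e] x by argo
    qed
    show ?thesis
    proof (rule inj_onI, clarify)
      fix s j s' j'
      assume *: "s \<in> S" "j < ?p" "s' \<in> S" "j' < ?p" "s + of_nat j * x = s' + of_nat j' * x"
      have "j = j'"
        using key[of s s' j j'] key[of s' s j' j] * by (metis linorder_neqE_nat)
      thus "s = s' \<and> j = j'" using * by simp
    qed
  qed
  have "finite S" by simp
  show "card S' = ?p * card S"
    unfolding S'_def by (simp add: card_image[OF inj] card_cartesian_product)
qed

lemma card_power_char_aux:
  fixes S :: "'a::{field,finite} set"
  shows "addsub S \<Longrightarrow> card S = CHAR('a) ^ k \<Longrightarrow> \<exists>m. CARD('a) = CHAR('a) ^ m"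
proof (induction "CARD('a) - card S" arbitrary: S k rule: less_induct)
  case less
  show ?case
  proof (cases "S = UNIV")
    case True thus ?thesis using less by auto
  next
    case False
    then obtain x where x: "x \<notin> S" by blast
    define S' where "S' = (\<lambda>(s,j). s + of_nat j * x) ` (S \<times> {..<CHAR('a)})"
    have 1: "addsub S'" "card S' = CHAR('a) * card S"
      using addsub_extend[OF less(2) x] unfolding S'_def by auto
    have "card S > 0" using less(3) char_ge2[where 'a='a] by simp
    moreover have "card S' \<le> CARD('a)" by (simp add: card_mono)
    moreover have "card S < CHAR('a) * card S" using \<open>card S > 0\<close> char_ge2[where 'a='a] by simp
    ultimately have "CARD('a) - card S' < CARD('a) - card S"
      using 1(2) by linarith
    thus ?thesis using less(1)[OF _ 1(1), of "Suc k"] 1(2) less(3) by simp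
  qed
qed

lemma card_power_char: "\<exists>m. CARD('a::{field,finite}) = CHAR('a) ^ m"
proof -
  have "addsub {0::'a}" by (simp add: addsub_def)
  thus ?thesis using card_power_char_aux[of "{0::'a}" 0] by simp
qed


abbreviation ndeg :: "'a::{field,finite} itself \<Rightarrow> nat" where
  "ndeg T \<equiv> multiplicity CHAR('a) CARD('a)"

lemma card_eq_pow: "CARD('a::{field,finite}) = CHAR('a) ^ ndeg TYPE('a)"
proof -
  obtain m where m: "CARD('a) = CHAR('a) ^ m" using card_power_char by blast
  have "prime_elem CHAR('a)" using char_prime[where 'a='a] by simp
  thus ?thesis using m by simp
qed

lemma ndeg_pos: "ndeg TYPE('a::{field,finite}) \<ge> 1"
proof (rule ccontr)
  assume "\<not> ?thesis"
  hence "ndeg TYPE('a) = 0" by simp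
  hence "CARD('a) = 1" using card_eq_pow[where 'a='a] by simp
  moreover have "card {0::'a,1} \<le> CARD('a)" by (rule card_mono) auto
  ultimately show False by simp
qed

lemma pow_pn_same: "(x::'a::{field,finite}) ^ (CHAR('a) ^ ndeg TYPE('a)) = x"
  using pow_card_same[of x] card_eq_pow[where 'a='a] by simp

lemma dream_pow: "((x::'a::{field,finite}) + y) ^ (CHAR('a) ^ i) = x ^ (CHAR('a) ^ i) + y ^ (CHAR('a) ^ i)"
  by (rule freshmans_dream') (simp_all add: char_prime)

lemma dream_pow_diff: "((x::'a::{field,finite}) - y) ^ (CHAR('a) ^ i) = x ^ (CHAR('a) ^ i) - y ^ (CHAR('a) ^ i)"
  using dream_pow[of "x - y" y i] by (simp add: eq_diff_eq)

lemma abs_trace_diff: "abs_trace ((x::'a::{field,finite}) - y) = abs_trace x - abs_trace y"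
  unfolding abs_trace_def by (simp add: dream_pow_diff sum_subtractf)

lemma abs_trace_0: "abs_trace (0::'a::{field,finite}) = 0"
  unfolding abs_trace_def using prime_gt_0_nat[OF char_prime[where 'a='a]]
  by (intro sum.neutral) (simp add: zero_power)

lemma abs_trace_pow_char: "abs_trace (x::'a::{field,finite}) ^ CHAR('a) = abs_trace x"
proof -
  let ?n = "ndeg TYPE('a)" and ?p = "CHAR('a)"
  define f where "f = (\<lambda>i. x ^ (?p ^ i))"
  have tr: "abs_trace x = (\<Sum>i<?n. f i)" unfolding abs_trace_def f_def by simp
  have "abs_trace x ^ ?p = (\<Sum>i<?n. f i ^ ?p)"
    unfolding tr by (rule freshmans_dream_sum) (simp_all add: char_prime)
  also have "\<dots> = (\<Sum>i<?n. f (Suc i))" by (simp add: f_def power_mult[symmetric] mult.commute)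
  finally have 1: "abs_trace x ^ ?p = (\<Sum>i<?n. f (Suc i))" .
  have e1: "(\<Sum>i<Suc ?n. f i) = f 0 + (\<Sum>i<?n. f (Suc i))" by (rule sum.lessThan_Suc_shift)
  have e2: "(\<Sum>i<Suc ?n. f i) = (\<Sum>i<?n. f i) + f ?n" by (rule sum.lessThan_Suc)
  have e3: "f ?n = f 0" using pow_pn_same[of x] by (simp add: f_def)
  show ?thesis using 1 e1 e2 e3 tr by (simp add: add.commute)
qed

lemma of_nat_pow_char: "(of_nat k :: 'a::{field,finite}) ^ CHAR('a) = of_nat k"
proof (induction k)
  case 0 thus ?case using char_ge2[where 'a='a] by simp
next
  case (Suc k)
  have "(1 + of_nat k :: 'a) ^ CHAR('a) = 1 ^ CHAR('a) + of_nat k ^ CHAR('a)"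
    by (rule freshmans_dream) (simp_all add: char_prime)
  thus ?case using Suc by simp
qed

lemma inj_of_nat_char: "inj_on (of_nat :: nat \<Rightarrow> 'a::{field,finite}) {..<CHAR('a)}"
  by (rule inj_onI) (auto simp: of_nat_eq_iff_cong_CHAR intro: cong_less_modulus_unique_nat)

lemma fixed_char_prime_field:
  fixes y :: "'a::{field,finite}"
  assumes "y ^ CHAR('a) = y"
  shows "\<exists>k<CHAR('a). y = of_nat k"
proof -
  let ?p = "CHAR('a)"
  define P where "P = monom (1::'a) ?p - monom 1 1"
  have p2: "?p \<ge> 2" by (rule char_ge2)
  have cP: "coeff P ?p = 1" using p2 by (simp add: P_def)
  hence P0: "P \<noteq> 0" by auto
  have dP: "degree P \<le> ?p" unfolding P_def using p2
    by (intro degree_le) auto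
  have R: "{y. poly P y = 0} = {y. y ^ ?p = y}" by (simp add: P_def poly_monom)
  have cR: "card {y::'a. y ^ ?p = y} \<le> ?p"
    using card_poly_roots_bound[OF P0] dP R by simp
  have sub: "of_nat ` {..<?p} \<subseteq> {y::'a. y ^ ?p = y}" using of_nat_pow_char by auto
  have ci: "card (of_nat ` {..<?p} :: 'a set) = ?p" using card_image[OF inj_of_nat_char] by simp
  have "of_nat ` {..<?p} = {y::'a. y ^ ?p = y}"
    using card_subset_eq[OF _ sub] ci cR card_mono[OF _ sub] by simp
  thus ?thesis using assms by auto
qed

lemma tr_nat:
  fixes x :: "'a::{field,finite}"
  shows "tr_nat x < CHAR('a) \<and> of_nat (tr_nat x) = abs_trace x"
proof -
  obtain k where k: "k < CHAR('a)" "abs_trace x = of_nat k"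
    using fixed_char_prime_field[OF abs_trace_pow_char[of x]] by blast
  have "\<exists>!k. k < CHAR('a) \<and> (of_nat k :: 'a) = abs_trace x"
    using k inj_of_nat_char[where 'a='a] by (auto simp: inj_on_def)
  hence "tr_nat x < CHAR('a) \<and> (of_nat (tr_nat x) :: 'a) = abs_trace x"
    unfolding tr_nat_def by (rule theI')
  thus ?thesis .
qed

lemma tr_nat_eq_0_iff: "tr_nat (x::'a::{field,finite}) = 0 \<longleftrightarrow> abs_trace x = 0"
proof -
  have "tr_nat x = 0 \<longleftrightarrow> (of_nat (tr_nat x) :: 'a) = of_nat 0"
    using tr_nat[of x] inj_of_nat_char[where 'a='a] char_ge2[where 'a='a]
    by (auto simp: inj_on_def simp del: of_nat_eq_0_iff_char_dvd)
  thus ?thesis using tr_nat[of x] by simp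
qed


lemma pow_shift_period:
  fixes x :: "'a::{field,finite}"
  assumes "k \<ge> 1"
  shows "x ^ (k + (CARD('a) - 1) * t) = x ^ k"
proof (induction t)
  case 0 show ?case by simp
next
  case (Suc t)
  obtain Q where Q: "CARD('a) = Suc Q" using gr0_implies_Suc[OF finite_UNIV_card_ge_0[where 'a='a]] by auto
  have "k + (CARD('a) - 1) * Suc t = (k - 1 + (CARD('a) - 1) * t) + CARD('a)"
    using assms unfolding Q by (simp add: algebra_simps)
  hence "x ^ (k + (CARD('a) - 1) * Suc t) = x ^ (k - 1 + (CARD('a) - 1) * t) * x"
    by (simp add: power_add pow_card_same)
  also have "\<dots> = x ^ (k + (CARD('a) - 1) * t)"
    using assms by (simp add: power_Suc2[symmetric] Suc_diff_le)
  finally show ?case using Suc by simp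
qed

lemma pow_reduce:
  fixes x :: "'a::{field,finite}"
  assumes "m \<ge> 1"
  shows "x ^ m = x ^ ((m - 1) mod (CARD('a) - 1) + 1)"
proof -
  let ?N = "CARD('a) - 1"
  have "m = ((m - 1) mod ?N + 1) + ?N * ((m - 1) div ?N)"
    using assms by simp
  hence "x ^ m = x ^ (((m - 1) mod ?N + 1) + ?N * ((m - 1) div ?N))" by metis
  also have "\<dots> = x ^ ((m - 1) mod ?N + 1)" by (rule pow_shift_period) simp
  finally show ?thesis .
qed

lemma nondeg_witness:
  fixes u :: "'a::{field,finite}" and s :: nat
  assumes s0: "s > 0" and cop: "coprime s (CARD('a) - 1)"
    and nd: "\<not> degenerate TYPE('a) s"
  shows "\<exists>x. abs_trace (x ^ s - u * x) \<noteq> 0"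
proof (rule ccontr)
  assume "\<not> ?thesis"
  hence all0: "\<And>x. abs_trace (x ^ s - u * x) = 0" by blast
  let ?p = "CHAR('a)" and ?q = "CARD('a)" and ?n = "ndeg TYPE('a)"
  define N where "N = ?q - 1"
  have p2: "?p \<ge> 2" by (rule char_ge2)
  have qpn: "?q = ?p ^ ?n" by (rule card_eq_pow)
  have n1: "?n \<ge> 1" by (rule ndeg_pos)
  have q2: "?q \<noteq> 2"
  proof
    assume "?q = 2"
    hence "[s = ?p ^ 0] (mod (?q - 1))" by (simp add: cong_def)
    thus False using nd unfolding degenerate_def by blast
  qed
  have "card {0::'a,1} \<le> ?q" by (rule card_mono) auto
  hence q3: "?q \<ge> 3" using q2 by simp
  hence N2: "N \<ge> 2" unfolding N_def by simp
  have pi_small: "?p ^ i < N" if "i < ?n" for i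
  proof -
    have "?p ^ i \<le> ?p ^ (?n - 1)" using that p2 by (intro power_increasing) auto
    moreover have "?p ^ (?n - 1) * 2 \<le> ?p ^ (?n - 1) * ?p" using p2 by simp
    moreover have "?p ^ (?n - 1) * ?p = ?q" using qpn n1 by (simp add: power_Suc2[symmetric])
    ultimately show ?thesis using q3 unfolding N_def by linarith
  qed
  define e where "e i = (s * ?p ^ i - 1) mod N + 1" for i
  have e_le: "e i \<le> N" for i unfolding e_def using N2
    by (metis Suc_leI add.commute mod_less_divisor neq0_conv not_numeral_le_zero plus_1_eq_Suc)
  have sp1: "s * ?p ^ i \<ge> 1" for i using s0 p2 by (simp add: Suc_le_eq)
  have xe: "x ^ (s * ?p ^ i) = x ^ e i" for x :: 'a and i
    unfolding e_def N_def by (rule pow_reduce[OF sp1])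
  define P where "P = (\<Sum>i<?n. monom (1::'a) (e i)) - (\<Sum>i<?n. monom (u ^ (?p ^ i)) (?p ^ i))"
  have polyP: "poly P x = abs_trace (x ^ s - u * x)" for x
  proof -
    have "poly P x = (\<Sum>i<?n. x ^ e i) - (\<Sum>i<?n. u ^ (?p ^ i) * x ^ (?p ^ i))"
      by (simp add: P_def poly_sum poly_monom)
    also have "\<dots> = (\<Sum>i<?n. (x ^ s) ^ (?p ^ i)) - (\<Sum>i<?n. (u * x) ^ (?p ^ i))"
      by (simp add: xe[symmetric] power_mult power_mult_distrib)
    also have "\<dots> = abs_trace (x ^ s) - abs_trace (u * x)" by (simp add: abs_trace_def)
    finally show ?thesis by (simp add: abs_trace_diff)
  qed
  have degP: "degree P \<le> N"
    unfolding P_def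
    by (intro degree_diff_le degree_sum_le) (auto simp: degree_monom_le e_le less_imp_le pi_small
        intro: order.trans[OF degree_monom_le])
  have P0: "P = 0"
  proof (rule ccontr)
    assume "P \<noteq> 0"
    hence "card {x. poly P x = 0} \<le> degree P" by (rule card_poly_roots_bound)
    moreover have "{x. poly P x = 0} = UNIV" using polyP all0 by auto
    ultimately show False using degP q3 unfolding N_def by simp
  qed
  have c1: "(\<Sum>i<?n. if e i = e 0 then (1::'a) else 0) = 1"
  proof -
    have "(\<Sum>i<?n. if e i = e 0 then (1::'a) else 0) = (\<Sum>i<?n. if i = 0 then 1 else 0)"
    proof (rule sum.cong)
      fix i assume i: "i \<in> {..<?n}"
      show "(if e i = e 0 then (1::'a) else 0) = (if i = 0 then 1 else 0)"
      proof (cases "i = 0")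
        case False
        have "e 0 \<noteq> e i"
        proof
          assume "e 0 = e i"
          hence "[s * ?p ^ 0 - 1 = s * ?p ^ i - 1] (mod N)" unfolding e_def cong_def by simp
          hence "[s * ?p ^ 0 - 1 + 1 = s * ?p ^ i - 1 + 1] (mod N)" by (rule cong_add) simp
          moreover have "s * ?p ^ 0 - 1 + 1 = s * 1" "s * ?p ^ i - 1 + 1 = s * ?p ^ i"
            using le_add_diff_inverse2[OF sp1[of 0]] le_add_diff_inverse2[OF sp1[of i]] by simp_all
          ultimately have "[s * 1 = s * ?p ^ i] (mod N)" by metis
          hence "[1 = ?p ^ i] (mod N)" using cop unfolding N_def
            by (subst (asm) cong_mult_lcancel_nat) auto
          moreover have "1 < ?p ^ i" using p2 False by (intro one_less_power) auto
          ultimately show False using pi_small[of i] i N2 by (auto simp: cong_def)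
        qed
        thus ?thesis using False by auto
      qed simp
    qed simp
    also have "\<dots> = 1" using n1 by simp
    finally show ?thesis .
  qed
  have c2: "(\<Sum>i<?n. if ?p ^ i = e 0 then u ^ (?p ^ i) else 0) = 0"
  proof (rule sum.neutral, safe)
    fix i assume "i < ?n"
    show "(if ?p ^ i = e 0 then u ^ (?p ^ i) else 0) = 0"
    proof (cases "?p ^ i = e 0")
      case True
      have "[e 0 = s] (mod N)" unfolding e_def cong_def using s0
        by (metis One_nat_def Suc_pred mod_Suc_eq mult.right_neutral power_0 add.commute plus_1_eq_Suc)
      hence "[s = ?p ^ i] (mod (?q - 1))" using True unfolding N_def by (simp add: cong_sym)
      thus ?thesis using nd unfolding degenerate_def by blast
    qed simp
  qed
  have "coeff P (e 0) = 1"
    unfolding P_def by (simp add: coeff_sum c1 c2 del: One_nat_def)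
  thus False using P0 by simp
qed



definition cyc :: "nat \<Rightarrow> int poly" where
  "cyc p = (\<Sum>i<p. [:0,1:] ^ i)"

lemma pcompose_pow: "pcompose (q ^ n) r = pcompose q r ^ n"
  by (induction n) (simp_all add: pcompose_mult pcompose_1)

lemma geom_mult: "((x::'a::comm_ring_1) - 1) * (\<Sum>i<p. x ^ i) = x ^ p - 1"
  by (induction p) (simp_all add: algebra_simps)

lemma cyc_mult: "([:0,1:] - 1) * cyc p = [:0,1:] ^ p - 1"
  unfolding cyc_def by (rule geom_mult)

lemma cyc_shift: "[:0,1:] * pcompose (cyc p) [:1,1:] = [:1,1:] ^ p - 1"
proof -
  have "pcompose (([:0,1:] - 1) * cyc p) [:1,1:] = pcompose ([:0,1:] ^ p - 1) [:1,1:]"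
    by (simp only: cyc_mult)
  moreover have "pcompose ([:0,1:] - 1) [:1,1:] = ([:0,1:] :: int poly)"
    by (simp add: pcompose_diff pcompose_pCons pcompose_1 one_pCons)
  moreover have "pcompose ([:0,1:] ^ p - 1) [:1,1:] = ([:1,1:] ^ p - 1 :: int poly)"
    by (simp add: pcompose_diff pcompose_pow pcompose_pCons pcompose_1)
  ultimately show ?thesis
    by (simp only: pcompose_mult)
qed

lemma coeff_cyc_shift:
  assumes "k < p"
  shows "coeff (pcompose (cyc p) [:1,1:]) k = int (p choose (k+1))"
proof -
  have "coeff ([:0,1:] * pcompose (cyc p) [:1,1:]) (Suc k) = coeff ([:1,1:] ^ p - 1) (Suc k)"
    by (simp only: cyc_shift)
  moreover have "coeff ([:0,1:] * pcompose (cyc p) [:1,1:]) (Suc k) = coeff (pcompose (cyc p) [:1,1:]) k"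
    by simp
  moreover have "coeff ([:1,1:] ^ p - 1 :: int poly) (Suc k) = int (p choose (k+1))"
    using assms by (simp add: coeff_linear_poly_power)
  ultimately show ?thesis by simp
qed

lemma eis_aux:
  fixes F G H :: "int poly" and q :: int
  assumes q: "prime q" and FGH: "F = G * H" and lc: "lead_coeff F = 1"
    and dv: "\<forall>k<degree F. q dvd coeff F k"
    and G0: "q dvd coeff G 0" and H0: "\<not> q dvd coeff H 0"
  shows "degree H = 0"
proof (rule ccontr)
  assume dH: "degree H \<noteq> 0"
  have "F \<noteq> 0" using lc by auto
  hence G: "G \<noteq> 0" and H: "H \<noteq> 0" using FGH by auto
  have dF: "degree F = degree G + degree H" using FGH G H by (simp add: degree_mult_eq)
  have "lead_coeff G * lead_coeff H = 1" using FGH lc by (simp add: lead_coeff_mult)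
  hence "\<not> q dvd lead_coeff G"
    using q by (metis dvd_mult2 not_prime_unit)
  hence ex: "\<exists>k. \<not> q dvd coeff G k" by blast
  define k where "k = (LEAST k. \<not> q dvd coeff G k)"
  have k1: "\<not> q dvd coeff G k" unfolding k_def using ex by (rule LeastI_ex)
  have k2: "\<And>i. i < k \<Longrightarrow> q dvd coeff G i" unfolding k_def using not_less_Least by blast
  have "k \<le> degree G"
    using \<open>\<not> q dvd lead_coeff G\<close> k2 not_le by blast
  hence "k < degree F" using dF dH by linarith
  hence "q dvd coeff F k" using dv by blast
  moreover have "coeff F k = (\<Sum>i\<le>k. coeff G i * coeff H (k - i))"
    using FGH by (simp add: coeff_mult)
  moreover have "(\<Sum>i\<le>k. coeff G i * coeff H (k - i)) = coeff G k * coeff H 0 + (\<Sum>i<k. coeff G i * coeff H (k - i))"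
    by (simp add: lessThan_Suc_atMost[symmetric])
  moreover have "q dvd (\<Sum>i<k. coeff G i * coeff H (k - i))"
    by (intro dvd_sum) (simp add: k2)
  ultimately have "q dvd coeff G k * coeff H 0"
    by (metis dvd_add_left_iff)
  thus False using q k1 H0 by (simp add: prime_dvd_mult_iff)
qed

lemma eisenstein:
  fixes F G H :: "int poly" and q :: int
  assumes q: "prime q" and FGH: "F = G * H" and lc: "lead_coeff F = 1"
    and dv: "\<forall>k<degree F. q dvd coeff F k" and sq: "\<not> q^2 dvd coeff F 0"
    and dF: "degree F > 0"
  shows "degree G = 0 \<or> degree H = 0"
proof -
  have F0: "coeff F 0 = coeff G 0 * coeff H 0" using FGH by (simp add: coeff_mult)
  have "q dvd coeff F 0" using dv dF by blast
  show ?thesis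
  proof (cases "q dvd coeff G 0")
    case True
    have "\<not> q dvd coeff H 0"
    proof
      assume "q dvd coeff H 0"
      hence "q^2 dvd coeff F 0" using True F0 by (simp add: power2_eq_square mult_dvd_mono)
      thus False using sq by simp
    qed
    thus ?thesis using eis_aux[OF q FGH lc dv True] by simp
  next
    case False
    hence "q dvd coeff H 0" using \<open>q dvd coeff F 0\<close> F0 q by (simp add: prime_dvd_mult_iff)
    have "F = H * G" using FGH by (simp add: mult.commute)
    thus ?thesis using eis_aux[OF q _ lc dv \<open>q dvd coeff H 0\<close> False] by simp
  qed
qed

lemma coeff_cyc: "coeff (cyc p) i = (if i < p then 1 else 0)"
  unfolding cyc_def by (simp add: coeff_sum monom_altdef[of 1, simplified, symmetric])

lemma degree_cyc: assumes "p \<ge> 1" shows "degree (cyc p) = p - 1"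
proof (rule antisym)
  show "degree (cyc p) \<le> p - 1" by (rule degree_le) (auto simp: coeff_cyc)
  show "p - 1 \<le> degree (cyc p)" by (rule le_degree) (use assms in \<open>simp add: coeff_cyc\<close>)
qed

lemma lead_coeff_cyc: "p \<ge> 1 \<Longrightarrow> lead_coeff (cyc p) = 1"
  by (simp add: degree_cyc coeff_cyc)

lemma irreducible_cyc:
  assumes p: "prime p"
  shows "irreducible (cyc p)"
proof -
  have p1: "p \<ge> 2" using p prime_ge_2_nat by blast
  define F where "F = pcompose (cyc p) [:1,1:]"
  have dF: "degree F = p - 1" unfolding F_def using p1 by (simp add: degree_pcompose degree_cyc)
  have lcF: "lead_coeff F = 1" using dF coeff_cyc_shift[of "p-1" p] p1 by (simp add: F_def)
  have dv: "\<forall>k<degree F. int p dvd coeff F k"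
  proof safe
    fix k assume "k < degree F"
    hence "k + 1 < p" using dF by simp
    hence "p dvd (p choose (k+1))" using p by (intro dvd_choose_prime) auto
    thus "int p dvd coeff F k" using \<open>k+1<p\<close> by (simp add: F_def coeff_cyc_shift)
  qed
  have sq: "\<not> (int p)^2 dvd coeff F 0"
  proof
    assume a: "(int p)^2 dvd coeff F 0"
    have "coeff F 0 = int (p choose (0+1))" unfolding F_def by (rule coeff_cyc_shift) (use p1 in simp)
    hence "(int p)^2 dvd int p" using a by simp
    hence "int p * int p dvd int p * 1" by (simp add: power2_eq_square)
    hence "int p dvd 1" using p1 by (subst (asm) dvd_mult_cancel_left) auto
    thus False using p1 by simp
  qed
  have pi: "prime (int p)" using p by simp
  show ?thesis
  proof (rule irreducibleI)
    show "cyc p \<noteq> 0" using lead_coeff_cyc[of p] p1 by auto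
    show "\<not> cyc p dvd 1"
      using degree_cyc[of p] p1 by (auto simp: is_unit_poly_iff)
  next
    fix g h assume gh: "cyc p = g * h"
    have "F = pcompose g [:1,1:] * pcompose h [:1,1:]" unfolding F_def gh by (simp add: pcompose_mult)
    from eisenstein[OF pi this lcF dv sq] dF p1
    have dg: "degree g = 0 \<or> degree h = 0" by (simp add: degree_pcompose)
    have lc: "lead_coeff g * lead_coeff h = 1"
      using gh lead_coeff_cyc[of p] p1 by (simp add: lead_coeff_mult)
    from dg show "g dvd 1 \<or> h dvd 1"
    proof
      assume "degree g = 0"
      then obtain a where a: "g = [:a:]" by (elim degree_eq_zeroE)
      have "a * lead_coeff h = 1" using \<open>lead_coeff g * lead_coeff h = 1\<close> a by simp
      hence "a dvd 1" by (metis dvd_triv_left)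
      thus ?thesis using a by (simp add: is_unit_poly_iff)
    next
      assume "degree h = 0"
      then obtain a where a: "h = [:a:]" by (elim degree_eq_zeroE)
      have "lead_coeff g * a = 1" using \<open>lead_coeff g * lead_coeff h = 1\<close> a by simp
      hence "a dvd 1" by (metis dvd_triv_right)
      thus ?thesis using a by (simp add: is_unit_poly_iff)
    qed
  qed
qed


lemma fract_clear:
  fixes P :: "int fract poly"
  shows "\<exists>c Q. c \<noteq> 0 \<and> smult (to_fract c) P = fract_poly Q"
proof (induction P)
  case 0
  show ?case by (intro exI[of _ 1] exI[of _ 0]) simp
next
  case (pCons a P)
  then obtain c Q where cQ: "c \<noteq> 0" "smult (to_fract c) P = fract_poly Q" by blast
  define n where "n = fst (quot_of_fract a)"
  define m where "m = snd (quot_of_fract a)"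
  have m0: "m \<noteq> 0" unfolding m_def by simp
  have a: "a = to_fract n / to_fract m"
    unfolding n_def m_def by (metis Fract_conv_to_fract Fract_quot_of_fract)
  have "smult (to_fract (c * m)) (pCons a P) = fract_poly (pCons (c * n) (smult m Q))"
    using cQ m0 by (simp add: a map_poly_pCons smult_conv_map_poly[symmetric]
        flip: cQ(2) mult_smult_left) (simp add: mult.commute)
  thus ?case using cQ m0 by (intro exI[of _ "c*m"] exI[of _ "pCons (c * n) (smult m Q)"]) simp
qed

lemma field_poly_bezout_const:
  fixes a b :: "'a::field poly"
  assumes irr: "irreducible a" and nd: "\<not> a dvd b"
  shows "\<exists>A B c. c \<noteq> 0 \<and> A * a + B * b = [:c:]"
proof -
  define S where "S = {A * a + B * b | A B. True}"
  have aS: "a \<in> S" unfolding S_def by (rule CollectI, rule exI[of _ 1], rule exI[of _ 0]) simp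
  have a0: "a \<noteq> 0" using irr by auto
  have ex: "\<exists>n. \<exists>M\<in>S. M \<noteq> 0 \<and> degree M = n" using aS a0 by blast
  define n where "n = (LEAST n. \<exists>M\<in>S. M \<noteq> 0 \<and> degree M = n)"
  obtain M where M: "M \<in> S" "M \<noteq> 0" "degree M = n"
    using LeastI_ex[OF ex] unfolding n_def[symmetric] by blast
  have mini: "\<And>N. N \<in> S \<Longrightarrow> N \<noteq> 0 \<Longrightarrow> n \<le> degree N"
    unfolding n_def by (rule Least_le) blast
  have mod_in: "x mod M \<in> S" if xS: "x \<in> S" for x
  proof -
    obtain A1 B1 where 1: "x = A1 * a + B1 * b" using xS unfolding S_def by blast
    obtain A2 B2 where 2: "M = A2 * a + B2 * b" using M(1) unfolding S_def by blast
    have "x mod M = x - (x div M) * M" by (simp add: minus_div_mult_eq_mod)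
    also have "\<dots> = (A1 - (x div M) * A2) * a + (B1 - (x div M) * B2) * b"
      by (simp add: 1 2 algebra_simps)
    finally show ?thesis unfolding S_def by blast
  qed
  have dvdM: "M dvd x" if "x \<in> S" for x
  proof (rule ccontr)
    assume "\<not> M dvd x"
    hence "x mod M \<noteq> 0" by (simp add: mod_eq_0_iff_dvd)
    hence "degree (x mod M) < degree M" using degree_mod_less[of M x] M(2) by auto
    moreover have "n \<le> degree (x mod M)" using mini mod_in[OF that] \<open>x mod M \<noteq> 0\<close> by blast
    ultimately show False using M(3) by simp
  qed
  have bS: "b \<in> S" unfolding S_def by (rule CollectI, rule exI[of _ 0], rule exI[of _ 1]) simp
  have "M dvd a" "M dvd b" using dvdM aS bS by auto
  then obtain e where e: "a = M * e" by (elim dvdE)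
  from irreducibleD[OF irr e] have "is_unit M"
  proof
    assume "is_unit e"
    hence "a dvd M" using e by (simp add: mult_unit_dvd_iff)
    hence "a dvd b" using \<open>M dvd b\<close> by (rule dvd_trans)
    thus ?thesis using nd by blast
  qed
  then obtain c where c: "M = [:c:]" "c dvd 1" by (auto simp: is_unit_poly_iff)
  obtain A B where AB: "M = A * a + B * b" using M(1) unfolding S_def by blast
  have "c \<noteq> 0" using c M(2) by auto
  thus ?thesis using AB c(1) by metis
qed

definition ev :: "complex \<Rightarrow> int poly \<Rightarrow> complex" where
  "ev z X = poly (map_poly of_int X) z"

lemma map_poly_of_int_mult: "map_poly (of_int :: int \<Rightarrow> 'a::comm_ring_1) (X * Y) = map_poly of_int X * map_poly of_int Y"
  by (intro poly_eqI) (simp add: coeff_map_poly coeff_mult)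

lemma map_poly_of_int_add: "map_poly (of_int :: int \<Rightarrow> 'a::comm_ring_1) (X + Y) = map_poly of_int X + map_poly of_int Y"
  by (intro poly_eqI) (simp add: coeff_map_poly)

lemma ev_mult: "ev z (X * Y) = ev z X * ev z Y"
  by (simp add: ev_def map_poly_of_int_mult)

lemma ev_add: "ev z (X + Y) = ev z X + ev z Y"
  by (simp add: ev_def map_poly_of_int_add)

lemma ev_const: "ev z [:c:] = of_int c"
  by (cases "c = 0") (simp_all add: ev_def map_poly_pCons)

lemma ev_smult: "ev z (smult c X) = of_int c * ev z X"
proof -
  have "smult c X = [:c:] * X" by simp
  thus ?thesis by (simp only: ev_mult ev_const)
qed

lemma ev_sum: "ev z (sum f A) = (\<Sum>a\<in>A. ev z (f a))"
  by (induction A rule: infinite_finite_induct) (simp_all add: ev_def map_poly_of_int_add)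

lemma ev_monom: "ev z (monom c n) = of_int c * z ^ n"
  by (simp add: ev_def map_poly_monom poly_monom)

lemma ev_cyc:
  assumes "z ^ p = 1" "z \<noteq> 1"
  shows "ev z (cyc p) = 0"
proof -
  have "ev z (cyc p) = (\<Sum>i<p. z ^ i)"
    unfolding cyc_def ev_sum by (simp add: monom_altdef[of 1, simplified, symmetric] ev_monom)
  moreover have "(z - 1) * (\<Sum>i<p. z ^ i) = 0" using assms by (simp add: geom_mult)
  ultimately show ?thesis using assms by simp
qed

lemma content_cyc: "p \<ge> 1 \<Longrightarrow> content (cyc p) = 1"
proof -
  assume "p \<ge> 1"
  hence "content (cyc p) dvd 1" by (metis content_dvd_coeff lead_coeff_cyc)
  hence "normalize (content (cyc p)) = 1" by (simp add: is_unit_normalize)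
  thus ?thesis using normalize_content[of "cyc p"] by (simp del: normalize_content)
qed

lemma cyc_indep:
  fixes z :: complex and d :: "nat \<Rightarrow> int"
  assumes p: "prime p" and z: "z ^ p = 1" "z \<noteq> 1"
    and sum0: "(\<Sum>i<p. of_int (d i) * z ^ i) = 0"
  shows "\<forall>i<p. d i = d 0"
proof -
  have p1: "p \<ge> 1" using p prime_ge_1_nat by blast
  define D where "D = (\<Sum>i<p. monom (d i) i)"
  have coeffD: "coeff D i = (if i < p then d i else 0)" for i
    unfolding D_def by (simp add: coeff_sum)
  have evD: "ev z D = 0" unfolding D_def ev_sum using sum0 by (simp add: ev_monom)
  have evC: "ev z (cyc p) = 0" using ev_cyc z by blast
  have irr: "irreducible (fract_poly (cyc p))"
    using irreducible_cyc[OF p] degree_cyc[OF p1] content_cyc[OF p1] prime_ge_2_nat[OF p]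
    by (subst (asm) nonconst_poly_irreducible_iff) auto
  have "fract_poly (cyc p) dvd fract_poly D"
  proof (rule ccontr)
    assume nd: "\<not> ?thesis"
    obtain A B c where AB: "c \<noteq> 0" "A * fract_poly (cyc p) + B * fract_poly D = [:c:]"
      using field_poly_bezout_const[OF irr nd] by blast
    obtain cc QQ where cc: "cc \<noteq> 0" "smult (to_fract cc) [:c:] = fract_poly QQ" using fract_clear by blast
    obtain cA QA where A: "cA \<noteq> 0" "smult (to_fract cA) A = fract_poly QA" using fract_clear by blast
    obtain cB QB where B: "cB \<noteq> 0" "smult (to_fract cB) B = fract_poly QB" using fract_clear by blast
    have QQ0: "QQ \<noteq> 0" using cc AB(1) by (metis fract_poly_eq_0_iff smult_eq_0_iff to_fract_eq_0_iff pCons_eq_0_iff)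
    have "degree (fract_poly QQ) = 0" using cc(2)[symmetric] by simp
    hence "degree QQ = 0" by (simp add: degree_map_poly)
    then obtain k where k: "QQ = [:k:]" by (elim degree_eq_zeroE)
    have k0: "k \<noteq> 0" using QQ0 k by simp
    have "smult (to_fract (cA * cB * cc)) (A * fract_poly (cyc p) + B * fract_poly D) = smult (to_fract (cA * cB * cc)) [:c:]"
      by (simp add: AB)
    also have "smult (to_fract (cA * cB * cc)) [:c:] = fract_poly (smult (cA * cB) QQ)"
      by (simp flip: cc(2) add: mult_ac)
    also have "smult (to_fract (cA * cB * cc)) (A * fract_poly (cyc p) + B * fract_poly D) =
        fract_poly (smult (cB * cc) QA * cyc p + smult (cA * cc) QB * D)"
      by (simp add: smult_add_right flip: A(2) B(2) mult_smult_left) (simp add: mult_ac)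
    finally have "smult (cB * cc) QA * cyc p + smult (cA * cc) QB * D = smult (cA * cB) QQ"
      by (simp only: fract_poly_eq_iff)
    hence "ev z (smult (cB * cc) QA * cyc p + smult (cA * cc) QB * D) = ev z (smult (cA * cB) QQ)" by simp
    thus False using evD evC A(1) B(1) k k0 by (simp add: ev_add ev_mult ev_const ev_smult)
  qed
  hence "cyc p dvd D" using content_cyc[OF p1] by (rule fract_poly_dvdD)
  then obtain R where R: "D = cyc p * R" by (elim dvdE)
  show ?thesis
  proof (cases "R = 0")
    case True
    hence D0: "D = 0" using R by simp
    show ?thesis
    proof safe
      fix i assume "i < p"
      hence "d i = coeff D i" "d 0 = coeff D 0" using coeffD p1 by auto
      thus "d i = d 0" using D0 by simp
    qed
  next
    case False
    have "degree D \<le> p - 1" by (rule degree_le) (auto simp: coeffD)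
    moreover have "cyc p \<noteq> 0" using lead_coeff_cyc[OF p1] by auto
    ultimately have "degree R = 0" using R False degree_cyc[OF p1] by (simp add: degree_mult_eq)
    then obtain r where "R = [:r:]" by (elim degree_eq_zeroE)
    hence "coeff D i = r * coeff (cyc p) i" for i using R by simp
    thus ?thesis using coeffD p1 by (metis coeff_cyc mult.right_neutral prime_gt_0_nat p)
  qed
qed



lemma zeta_pow: "zeta p ^ k = exp (2 * pi * \<i> * of_nat k / of_nat p)"
  unfolding zeta_def by (simp add: exp_of_nat_mult[symmetric] mult_ac)

lemma zeta_pow_p: "p > 0 \<Longrightarrow> zeta p ^ p = 1"
  unfolding zeta_pow by simp

lemma zeta_pow_ne1:
  assumes "0 < k" "k < p"
  shows "zeta p ^ k \<noteq> 1"
proof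
  assume "zeta p ^ k = 1"
  hence "exp (2 * pi * \<i> * of_nat k / of_nat p) = 1" by (simp add: zeta_pow)
  then obtain n :: int where n: "2 * pi * real k / real p = of_int (2 * n) * pi"
    by (auto simp: exp_eq_1)
  have "2 * pi * (real k / real p) = 2 * pi * of_int n" using n by simp
  hence kp: "real k / real p = of_int n" by (subst (asm) mult_cancel_left) simp
  have p0: "real p > 0" using assms by simp
  hence k: "real k = of_int n * real p" using kp by (simp add: field_simps)
  show False
  proof (cases "n \<le> 0")
    case True
    hence "of_int n * real p \<le> 0" using p0 by (simp add: mult_nonpos_nonneg)
    thus False using k assms by simp
  next
    case False
    hence "of_int n \<ge> (1::real)" by simp
    hence "of_int n * real p \<ge> real p" using p0 by simp
    moreover have "real k < real p" using assms by simp
    ultimately show False using k by linarith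
  qed
qed

lemma norm_zeta_pow: "norm (zeta p ^ k) = 1"
  unfolding zeta_pow by (simp add: norm_exp)


lemma norm_one_plus_lt2:
  fixes z :: complex
  assumes "z \<noteq> 1" "norm z = 1"
  shows "norm (1 + z) < 2"
proof -
  have "norm (1 + z) \<le> norm (1::complex) + norm z" by (rule norm_triangle_ineq)
  moreover have "norm (1 + z) \<noteq> norm (1::complex) + norm z"
    using assms by (subst norm_triangle_eq) simp
  ultimately show ?thesis using assms by simp
qed

lemma Wsum_alt: "Wsum s u = (\<Sum>x\<in>UNIV. zeta CHAR('a) ^ tr_nat (x ^ s - u * (x::'a::{field,finite})))"
  unfolding Wsum_def psi_def by simp

lemma Wsum_count:
  "Wsum s u = (\<Sum>i<CHAR('a). of_nat (card {x::'a::{field,finite}. tr_nat (x ^ s - u * x) = i}) * zeta CHAR('a) ^ i)"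
proof -
  define t where "t x = tr_nat (x ^ s - u * x)" for x :: 'a
  have img: "t ` UNIV \<subseteq> {..<CHAR('a)}" using tr_nat unfolding t_def by auto
  have "Wsum s u = (\<Sum>x\<in>UNIV. zeta CHAR('a) ^ t x)" unfolding Wsum_alt t_def ..
  also have "\<dots> = (\<Sum>i<CHAR('a). \<Sum>x\<in>{x \<in> UNIV. t x = i}. zeta CHAR('a) ^ t x)"
    by (rule sum.group[symmetric]) (use img in auto)
  also have "\<dots> = (\<Sum>i<CHAR('a). of_nat (card {x. t x = i}) * zeta CHAR('a) ^ i)"
    by (intro sum.cong refl) simp
  finally show ?thesis unfolding t_def .
qed

lemma sum_count:
  "(\<Sum>i<CHAR('a). card {x::'a::{field,finite}. tr_nat (x ^ s - u * x) = i}) = CARD('a)"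
proof -
  define t where "t x = tr_nat (x ^ s - u * x)" for x :: 'a
  have img: "t ` UNIV \<subseteq> {..<CHAR('a)}" using tr_nat unfolding t_def by auto
  have "(\<Sum>i<CHAR('a). \<Sum>x\<in>{x \<in> UNIV. t x = i}. (1::nat)) = (\<Sum>x\<in>(UNIV::'a set). 1)"
    using sum.group[of UNIV "{..<CHAR('a)}" t "\<lambda>_. (1::nat)"] img by simp
  thus ?thesis unfolding t_def by simp
qed

lemma uniq_rep:
  fixes w w' :: "nat list"
  assumes p: "prime p" and l: "length w = p" "length w' = p"
    and s: "sum_list w = sum_list w'"
    and e: "(\<Sum>i<p. of_nat (w ! i) * zeta p ^ i) = (\<Sum>i<p. of_nat (w' ! i) * zeta p ^ i)"
  shows "w = w'"
proof -
  have p0: "p > 0" using p prime_gt_0_nat by blast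
  define d where "d i = int (w ! i) - int (w' ! i)" for i
  have "(\<Sum>i<p. of_int (d i) * zeta p ^ i) = (\<Sum>i<p. of_nat (w ! i) * zeta p ^ i) - (\<Sum>i<p. of_nat (w' ! i) * zeta p ^ i)"
    by (simp add: d_def sum_subtractf algebra_simps)
  also have "\<dots> = 0" using e by simp
  moreover have z1: "zeta p \<noteq> 1" using zeta_pow_ne1[of 1 p] prime_gt_1_nat[OF p] by simp
  ultimately have all: "\<forall>i<p. d i = d 0"
    using cyc_indep[OF p zeta_pow_p[OF p0] z1] by simp
  have sumd: "(\<Sum>i<p. d i) = 0"
  proof -
    have "sum_list w = (\<Sum>i<p. w ! i)" "sum_list w' = (\<Sum>i<p. w' ! i)"
      using l by (simp_all add: sum_list_sum_nth atLeast0LessThan)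
    hence "(\<Sum>i<p. int (w ! i)) = (\<Sum>i<p. int (w' ! i))" using s by (metis of_nat_sum)
    thus ?thesis by (simp add: d_def sum_subtractf)
  qed
  have "(\<Sum>i<p. d i) = (\<Sum>i<p. d 0)"
    by (rule sum.cong) (use all in blast)+
  hence "int p * d 0 = 0" using sumd by simp
  hence d0: "d 0 = 0" using p0 by simp
  have "\<forall>i<p. w ! i = w' ! i"
  proof (intro allI impI)
    fix i assume "i < p"
    hence "d i = 0" using d0 all by metis
    thus "w ! i = w' ! i" unfolding d_def by simp
  qed
  thus ?thesis using l by (intro nth_equalityI) auto
qed


theorem lemma3p2:
  fixes u :: "'a::{field,finite}" and s :: nat
  assumes "s > 0" and "coprime s (CARD('a) - 1)"
  shows "(\<exists>!w :: nat list. length w = CHAR('a) \<and> w ! 0 > 0 \<and> sum_list w = CARD('a) \<and>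
            Wsum s u = (\<Sum>i < CHAR('a). of_nat (w ! i) * zeta CHAR('a) ^ i))
         \<and> (\<not> degenerate TYPE('a) s \<longrightarrow>
            (\<forall>w :: nat list. length w = CHAR('a) \<and> w ! 0 > 0 \<and> sum_list w = CARD('a) \<and>
                Wsum s u = (\<Sum>i < CHAR('a). of_nat (w ! i) * zeta CHAR('a) ^ i)
              \<longrightarrow> (\<forall>i < CHAR('a). w ! i < CARD('a)))
            \<and> cmod (Wsum s u) < real CARD('a))"
proof -
  let ?p = "CHAR('a)" and ?q = "CARD('a)"
  define t where "t x = tr_nat (x ^ s - u * x)" for x :: 'a
  define cnt where "cnt i = card {x. t x = i}" for i
  define w0 where "w0 = map cnt [0..<?p]"
  define P where "P w \<longleftrightarrow> length w = ?p \<and> w ! 0 > 0 \<and> sum_list w = ?q \<and>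
            Wsum s u = (\<Sum>i < ?p. of_nat (w ! i) * zeta ?p ^ i)" for w :: "nat list"
  have p2: "?p \<ge> 2" by (rule char_ge2)
  have pr: "prime ?p" by (rule char_prime)
  have t0: "t 0 = 0" unfolding t_def using assms(1) by (simp add: tr_nat_eq_0_iff abs_trace_0 zero_power)
  have w0i: "w0 ! i = cnt i" if "i < ?p" for i using that by (simp add: w0_def)
  have Pw0: "P w0"
  proof -
    have "length w0 = ?p" by (simp add: w0_def)
    moreover have "w0 ! 0 > 0"
    proof -
      have "0 \<in> {x. t x = 0}" using t0 by simp
      hence "card {x. t x = 0} > 0" by (intro card_gt_0_iff[THEN iffD2]) auto
      thus ?thesis using w0i[of 0] p2 by (simp add: cnt_def)
    qed
    moreover have "sum_list w0 = ?q"
      using sum_count[of s u]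
      by (simp add: w0_def interv_sum_list_conv_sum_set_nat cnt_def t_def
          atLeast0LessThan)
    moreover have "Wsum s u = (\<Sum>i < ?p. of_nat (w0 ! i) * zeta ?p ^ i)"
      unfolding Wsum_count by (intro sum.cong refl) (simp add: w0i cnt_def t_def)
    ultimately show ?thesis unfolding P_def by blast
  qed
  have uniq: "w = w0" if "P w" for w
    using uniq_rep[OF pr, of w w0] that Pw0 unfolding P_def by metis
  have part1: "\<exists>!w. P w" using Pw0 uniq by blast
  have part2: "(\<forall>w. P w \<longrightarrow> (\<forall>i < ?p. w ! i < ?q)) \<and> cmod (Wsum s u) < real ?q"
    if nd: "\<not> degenerate TYPE('a) s"
  proof -
    obtain x0 where "abs_trace (x0 ^ s - u * x0) \<noteq> 0"
      using nondeg_witness[OF assms nd] by blast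
    hence tx0: "t x0 \<noteq> 0" unfolding t_def by (simp add: tr_nat_eq_0_iff)
    hence x00: "x0 \<noteq> 0" using t0 by auto
    have cnt_lt: "cnt i < ?q" for i
    proof -
      have "{x. t x = i} \<subset> UNIV"
      proof (cases "i = 0")
        case True
        hence "x0 \<notin> {x. t x = i}" using tx0 by simp
        thus ?thesis by blast
      next
        case False
        hence "0 \<notin> {x. t x = i}" using t0 by simp
        thus ?thesis by blast
      qed
      hence "card {x. t x = i} < card (UNIV :: 'a set)" by (intro psubset_card_mono) auto
      thus ?thesis by (simp add: cnt_def)
    qed
    have A: "\<forall>w. P w \<longrightarrow> (\<forall>i < ?p. w ! i < ?q)"
      using uniq w0i cnt_lt by auto
    define z where "z = zeta ?p ^ t x0"
    have z1: "z \<noteq> 1" unfolding z_def using tx0 tr_nat[of "x0 ^ s - u * x0"]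
      by (intro zeta_pow_ne1) (auto simp: t_def)
    have nz: "norm z = 1" by (simp add: z_def norm_zeta_pow)
    have "Wsum s u = (\<Sum>x\<in>UNIV. zeta ?p ^ t x)" unfolding Wsum_alt t_def ..
    also have "\<dots> = (\<Sum>x\<in>{0,x0}. zeta ?p ^ t x) + (\<Sum>x\<in>UNIV - {0,x0}. zeta ?p ^ t x)"
      using sum.subset_diff[of "{0,x0}" "UNIV::'a set" "\<lambda>x. zeta ?p ^ t x"] by (simp add: add.commute)
    also have "(\<Sum>x\<in>{0,x0}. zeta ?p ^ t x) = 1 + z" using x00 t0 by (simp add: z_def)
    finally have W: "Wsum s u = (1 + z) + (\<Sum>x\<in>UNIV - {0,x0}. zeta ?p ^ t x)" .
    have "norm (\<Sum>x\<in>UNIV - {0,x0}. zeta ?p ^ t x) \<le> (\<Sum>x\<in>UNIV - {0,x0}. norm (zeta ?p ^ t x))"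
      by (rule norm_sum)
    also have "\<dots> = real (card (UNIV - {0::'a, x0}))" by (simp add: norm_zeta_pow)
    also have "card (UNIV - {0::'a, x0}) = ?q - 2" using x00 by (simp add: card_Diff_subset)
    finally have rest: "norm (\<Sum>x\<in>UNIV - {0,x0}. zeta ?p ^ t x) \<le> real (?q - 2)" .
    have q2: "?q \<ge> 2" using card_mono[of "UNIV::'a set" "{0, x0}"] x00 by simp
    have "cmod (Wsum s u) \<le> norm (1 + z) + norm (\<Sum>x\<in>UNIV - {0,x0}. zeta ?p ^ t x)"
      unfolding W by (rule norm_triangle_ineq)
    also have "\<dots> < 2 + real (?q - 2)" using norm_one_plus_lt2[OF z1 nz] rest by linarith
    also have "\<dots> = real ?q" using q2 by simp
    finally show ?thesis using A by blast
  qed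
  show ?thesis using part1 part2 unfolding P_def by blast
qed


end
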